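(* In the setting of Generalized Rejection Sampling (i.i.d. $X^{(1)},\dots,X^{(M)}\sim\bar p$, rewards $R_i=r(X^{(i)})$, empirical reward CDF $\hat F_R$), assume the law of $r(X^{(1)})$ is continuous with CDF $F$, fix $1\le K\le M$, and use the acceptance function $A(r,\hat F_R,x,\hat P_X)=1$ if $\hat F_R(r)>1-K/M$ and $0$ otherwise (so exactly the $K$ samples with the largest rewards are accepted, almost surely). Then the conditional law of $X^{(1)}$ given that it is accepted is proportional to $\exp(\hat r(x)/\alpha)\,\bar p(dx)$, i.e. it solves $\operatorname{argmax}_{\hat p}[\mathbb{E}_{\hat p}\hat r-\alpha\mathsf{KL}(\hat p\|\bar p)]$, where $$\frac{\hat r(x)}{\alpha}=\log\Big[\sum_{k=0}^{K-1}\binom{M-1}{k}F(r(x))^{M-k-1}\big(1-F(r(x))\big)^{k}\Big].$$ In particular, for $M=2,K=1$ (preference rewards) $\hat r(x)/\alpha=\log F(r(x))$, and for $K=M$, $\hat r\equiv 0$.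
   Context: $\bar p$ is a probability measure on a measurable space $\mathcal{X}$, $r:\mathcal{X}\to\mathbb{R}$ measurable, $\alpha>0$. $\hat F_R(u)=\frac1M\#\{i:R_i\le u\}$. Sample $X^{(i)}$ is accepted iff $A(R_i,\hat F_R(R_i),X^{(i)},\hat P_X)=1$. *)

theory Defs
  imports "HOL-Probability.Probability"
begin

definition reward_cdf :: "'a measure \<Rightarrow> ('a \<Rightarrow> real) \<Rightarrow> real \<Rightarrow> real" where
  "reward_cdf pbar r t = measure pbar {x \<in> space pbar. r x \<le> t}"

definition emp_cdf :: "nat \<Rightarrow> (nat \<Rightarrow> 'w \<Rightarrow> 'a) \<Rightarrow> ('a \<Rightarrow> real) \<Rightarrow> 'w \<Rightarrow> real \<Rightarrow> real" where
  "emp_cdf M X r w u = real (card {i. i < M \<and> r (X i w) \<le> u}) / real M"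

definition accepted :: "nat \<Rightarrow> nat \<Rightarrow> (nat \<Rightarrow> 'w \<Rightarrow> 'a) \<Rightarrow> ('a \<Rightarrow> real) \<Rightarrow> nat \<Rightarrow> 'w \<Rightarrow> bool" where
  "accepted M K X r i w \<longleftrightarrow> emp_cdf M X r w (r (X i w)) > 1 - real K / real M"

definition rhat :: "real \<Rightarrow> nat \<Rightarrow> nat \<Rightarrow> (real \<Rightarrow> real) \<Rightarrow> ('a \<Rightarrow> real) \<Rightarrow> 'a \<Rightarrow> real" where
  "rhat \<alpha> M K F r x = \<alpha> * ln (\<Sum>k<K. real ((M - 1) choose k) * F (r x) ^ (M - k - 1) * (1 - F (r x)) ^ k)"

end

theory Submission
  imports Defs
begin


lemma box_count:
  fixes N :: "'a measure" and J :: "nat set"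
  assumes N: "prob_space N" and J: "finite J" and B: "B \<in> sets N"
  shows "emeasure (PiM J (\<lambda>_. N)) {\<omega> \<in> space (PiM J (\<lambda>_. N)). m \<le> card {i\<in>J. \<omega> i \<in> B}}
     = ennreal (\<Sum>j\<in>{m..card J}. real (card J choose j) * measure N B ^ j * (1 - measure N B) ^ (card J - j))"
proof -
  interpret N: prob_space N by fact
  interpret P: product_prob_space "\<lambda>_. N" by unfold_locales
  define p where "p = measure N B"
  define box where "box S = PiE J (\<lambda>i. if i \<in> S then B else space N - B)" for S
  define SS where "SS = {S. S \<subseteq> J \<and> m \<le> card S}"
  have finSS: "finite SS" unfolding SS_def using J by auto
  have eq: "{\<omega> \<in> space (PiM J (\<lambda>_. N)). m \<le> card {i\<in>J. \<omega> i \<in> B}} = (\<Union>S\<in>SS. box S)"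
  proof (intro equalityI subsetI)
    fix \<omega> assume w: "\<omega> \<in> {\<omega> \<in> space (PiM J (\<lambda>_. N)). m \<le> card {i\<in>J. \<omega> i \<in> B}}"
    then have "\<omega> \<in> box {i\<in>J. \<omega> i \<in> B}" unfolding box_def by (auto simp: space_PiM PiE_iff)
    moreover have "{i\<in>J. \<omega> i \<in> B} \<in> SS" using w unfolding SS_def by auto
    ultimately show "\<omega> \<in> (\<Union>S\<in>SS. box S)" by blast
  next
    fix \<omega> assume "\<omega> \<in> (\<Union>S\<in>SS. box S)"
    then obtain S where S: "S \<in> SS" "\<omega> \<in> box S" by blast
    have "{i\<in>J. \<omega> i \<in> B} = S" using S unfolding box_def SS_def by (auto simp: PiE_iff split: if_splits)
    moreover have "\<omega> \<in> space (PiM J (\<lambda>_. N))" using S sets.sets_into_space[OF B]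
      unfolding box_def by (auto simp: space_PiM PiE_iff split: if_splits)
    ultimately show "\<omega> \<in> {\<omega> \<in> space (PiM J (\<lambda>_. N)). m \<le> card {i\<in>J. \<omega> i \<in> B}}" using S(1) unfolding SS_def by auto
  qed
  have boxsets: "box S \<in> sets (PiM J (\<lambda>_. N))" for S
    unfolding box_def using B by (intro sets_PiM_I_finite J) auto
  have disj: "disjoint_family_on box SS"
    unfolding disjoint_family_on_def box_def SS_def
  proof (intro ballI impI)
    fix S T assume "S \<in> {S. S \<subseteq> J \<and> m \<le> card S}" "T \<in> {S. S \<subseteq> J \<and> m \<le> card S}" "S \<noteq> T"
    then obtain i where i: "i \<in> J" "(i \<in> S) \<noteq> (i \<in> T)" by blast
    show "PiE J (\<lambda>i. if i \<in> S then B else space N - B) \<inter> PiE J (\<lambda>i. if i \<in> T then B else space N - B) = {}"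
      using i by (auto simp: PiE_iff) (metis Diff_iff)+
  qed
  have mbox: "emeasure (PiM J (\<lambda>_. N)) (box S) = ennreal (p ^ card S * (1 - p) ^ (card J - card S))" if "S \<subseteq> J" for S
  proof -
    have "emeasure (PiM J (\<lambda>_. N)) (box S) = (\<Prod>i\<in>J. emeasure N (if i \<in> S then B else space N - B))"
      unfolding box_def using B by (intro P.emeasure_PiM J) auto
    also have "\<dots> = (\<Prod>i\<in>J. ennreal (if i \<in> S then p else 1 - p))"
      using B by (intro prod.cong refl) (auto simp: p_def N.emeasure_eq_measure N.prob_compl)
    also have "\<dots> = ennreal (\<Prod>i\<in>J. (if i \<in> S then p else 1 - p))"
      by (intro prod_ennreal) (auto simp: p_def)
    also have "(\<Prod>i\<in>J. (if i \<in> S then p else 1 - p)) = p ^ card S * (1 - p) ^ (card J - card S)"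
    proof -
      have "(\<Prod>i\<in>J. (if i \<in> S then p else 1 - p)) = (\<Prod>i\<in>J \<inter> S. p) * (\<Prod>i\<in>J - S. 1 - p)"
        using prod.If_cases[OF J, of "\<lambda>i. i \<in> S" "\<lambda>_. p" "\<lambda>_. 1 - p"]
        by (simp add: Diff_eq)
      also have "\<dots> = p ^ card S * (1 - p) ^ (card J - card S)"
        using that J by (simp add: Int_absorb1 card_Diff_subset finite_subset)
      finally show ?thesis .
    qed
    finally show ?thesis .
  qed
  have "emeasure (PiM J (\<lambda>_. N)) (\<Union>S\<in>SS. box S) = (\<Sum>S\<in>SS. emeasure (PiM J (\<lambda>_. N)) (box S))"
    using boxsets disj finSS by (intro sum_emeasure[symmetric]) auto
  also have "\<dots> = (\<Sum>S\<in>SS. ennreal (p ^ card S * (1 - p) ^ (card J - card S)))"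
    using mbox unfolding SS_def by auto
  also have "\<dots> = ennreal (\<Sum>S\<in>SS. p ^ card S * (1 - p) ^ (card J - card S))"
    by (intro sum_ennreal) (auto simp: p_def)
  also have "(\<Sum>S\<in>SS. p ^ card S * (1 - p) ^ (card J - card S))
      = (\<Sum>j\<in>{m..card J}. (\<Sum>S\<in>{S\<in>SS. card S = j}. p ^ card S * (1 - p) ^ (card J - card S)))"
    using finSS by (intro sum.group[symmetric]) (auto simp: SS_def card_mono J)
  also have "\<dots> = (\<Sum>j\<in>{m..card J}. real (card J choose j) * p ^ j * (1 - p) ^ (card J - j))"
  proof (intro sum.cong refl)
    fix j assume j: "j \<in> {m..card J}"
    have "{S\<in>SS. card S = j} = {S. S \<subseteq> J \<and> card S = j}" using j unfolding SS_def by auto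
    then show "(\<Sum>S\<in>{S\<in>SS. card S = j}. p ^ card S * (1 - p) ^ (card J - card S)) = real (card J choose j) * p ^ j * (1 - p) ^ (card J - j)"
      using n_subsets[OF J, of j] by simp
  qed
  finally show ?thesis using eq by (simp add: p_def)
qed



lemma card_as_sum: "finite I \<Longrightarrow> real (card {i\<in>I. P i}) = (\<Sum>i\<in>I. if P i then 1 else 0)"
  by (simp add: sum.If_cases Int_def)

lemma meas_test:
  fixes N :: "'a measure" and r :: "'a \<Rightarrow> real"
  assumes [measurable]: "r \<in> borel_measurable N" "A \<in> sets N" and I: "finite I" "(0::nat) \<in> I"
  shows "{\<omega>\<in>space (PiM I (\<lambda>_. N)). \<omega> 0 \<in> A \<and> c < card {i\<in>I. r (\<omega> i) \<le> r (\<omega> 0)}} \<in> sets (PiM I (\<lambda>_. N))"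
proof -
  have "{\<omega>\<in>space (PiM I (\<lambda>_. N)). \<omega> 0 \<in> A \<and> c < card {i\<in>I. r (\<omega> i) \<le> r (\<omega> 0)}}
     = {\<omega>\<in>space (PiM I (\<lambda>_. N)). \<omega> 0 \<in> A \<and> real c < (\<Sum>i\<in>I. if r (\<omega> i) \<le> r (\<omega> 0) then 1 else 0)}"
    using I by (simp add: card_as_sum[symmetric])
  also have "\<dots> \<in> sets (PiM I (\<lambda>_. N))"
    using I by measurable
  finally show ?thesis .
qed



lemma binom_reindex:
  fixes p :: real
  assumes "1 \<le> K" "K \<le> M"
  shows "(\<Sum>j\<in>{M-K..M-1}. real ((M-1) choose j) * p ^ j * (1 - p) ^ (M - 1 - j))
       = (\<Sum>k<K. real ((M - 1) choose k) * p ^ (M - k - 1) * (1 - p) ^ k)"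
proof (rule sum.reindex_bij_witness[of _ "\<lambda>k. M - 1 - k" "\<lambda>j. M - 1 - j"])
  fix k assume k: "k \<in> {..<K}"
  show "M - 1 - (M - 1 - k) = k" using k assms by auto
  show "M - 1 - k \<in> {M-K..M-1}" using k assms by auto
next
  fix j assume j: "j \<in> {M-K..M-1}"
  show "M - 1 - (M - 1 - j) = j" "M - 1 - j \<in> {..<K}" using j assms by auto
  have jle: "j \<le> M - 1" using j by auto
  have "(M - 1) choose (M - 1 - j) = (M-1) choose j" using binomial_symmetric[OF jle] by simp
  moreover have "M - 1 - (M - 1 - j) = j" "M - (M - 1 - j) - 1 = j" "M - 1 - j = M - 1 - j" using j assms by auto
  ultimately show "real ((M-1) choose (M - 1 - j)) * p ^ (M - (M - 1 - j) - 1) * (1 - p) ^ (M - 1 - j)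
     = real ((M - 1) choose j) * p ^ j * (1 - p) ^ (M - 1 - j)" by simp
qed



lemma acc_iff:
  assumes "0 < M" "K \<le> M"
  shows "(real c / real M > 1 - real K / real M) \<longleftrightarrow> M - K < c"
proof -
  have e: "1 - real K / real M = (real M - real K) / real M" using assms by (simp add: field_simps)
  have "(real c / real M > 1 - real K / real M) \<longleftrightarrow> real M - real K < real c"
    unfolding e using assms by (simp add: divide_less_cancel)
  also have "\<dots> \<longleftrightarrow> real (M - K) < real c" using assms by (simp add: of_nat_diff)
  also have "\<dots> \<longleftrightarrow> M - K < c" by (rule of_nat_less_iff)
  finally show ?thesis .
qed

lemma key:
  fixes Pr :: "'w measure" and N :: "'a measure"
    and X :: "nat \<Rightarrow> 'w \<Rightarrow> 'a" and r :: "'a \<Rightarrow> real" and M K :: nat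
  assumes Pr: "prob_space Pr" and N: "prob_space N" and r[measurable]: "r \<in> borel_measurable N"
    and K: "1 \<le> K" "K \<le> M"
    and Xm: "\<forall>i<M. X i \<in> measurable Pr N" and Xd: "\<forall>i<M. distr Pr N (X i) = N"
    and ind: "prob_space.indep_vars Pr (\<lambda>_. N) X {..<M}"
    and A[measurable]: "A \<in> sets N"
  shows "emeasure Pr {w\<in>space Pr. X 0 w \<in> A \<and> accepted M K X r 0 w}
    = (\<integral>\<^sup>+x. indicator A x * ennreal (\<Sum>k<K. real ((M-1) choose k) * reward_cdf N r (r x) ^ (M-k-1)
          * (1 - reward_cdf N r (r x)) ^ k) \<partial>N)"
proof -
  interpret Pr: prob_space Pr by fact
  interpret N: prob_space N by fact
  define I where "I = {..<M}"
  define J where "J = {1..<M}"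
  define Q where "Q = PiM I (\<lambda>_. N)"
  define QJ where "QJ = PiM J (\<lambda>_. N)"
  have M0: "0 < M" using K by auto
  have IJ: "I = insert 0 J" "0 \<notin> J" "finite J" "card J = M - 1" "finite I" "0 \<in> I"
    using M0 unfolding I_def J_def by auto
  define X' where "X' i = X (if i < M then i else 0)" for i
  have rv: "X' i \<in> measurable Pr N" for i using Xm M0 unfolding X'_def by auto
  have ind': "Pr.indep_vars (\<lambda>_. N) X' I"
    using ind unfolding I_def by (subst Pr.indep_vars_cong[where J="{..<M}" and Y=X and N'="\<lambda>_. N"]) (auto simp: X'_def)
  have "distr Pr (PiM I (\<lambda>_. N)) (\<lambda>w. \<lambda>i\<in>I. X' i w) = PiM I (\<lambda>i. distr Pr N (X' i))"
    using Pr.indep_vars_iff_distr_eq_PiM[where I=I and M'="\<lambda>_. N" and X=X', OF _ rv] ind' IJ by auto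
  also have "\<dots> = Q" unfolding Q_def
    by (intro PiM_cong refl) (use Xd M0 in \<open>auto simp: X'_def I_def\<close>)
  finally have dQ: "distr Pr Q (\<lambda>w. \<lambda>i\<in>I. X' i w) = Q" unfolding Q_def .
  define Y where "Y w = (\<lambda>i\<in>I. X i w)" for w
  have YX': "Y = (\<lambda>w. \<lambda>i\<in>I. X' i w)" unfolding Y_def X'_def I_def by (auto simp: fun_eq_iff)
  have Ym: "Y \<in> measurable Pr Q" unfolding YX' Q_def using rv by (intro measurable_restrict) auto
  define E where "E = {\<omega>\<in>space Q. \<omega> 0 \<in> A \<and> M - K < card {i\<in>I. r (\<omega> i) \<le> r (\<omega> 0)}}"
  have Es: "E \<in> sets Q" unfolding E_def Q_def by (rule meas_test) (use IJ in auto)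
  have ev: "{w\<in>space Pr. X 0 w \<in> A \<and> accepted M K X r 0 w} = Y -` E \<inter> space Pr"
  proof (intro equalityI subsetI)
    fix w assume w: "w \<in> {w\<in>space Pr. X 0 w \<in> A \<and> accepted M K X r 0 w}"
    have "Y w \<in> space Q" using Ym w by (auto intro: measurable_space)
    moreover have "{i\<in>I. r (Y w i) \<le> r (Y w 0)} = {i. i < M \<and> r (X i w) \<le> r (X 0 w)}"
      using IJ unfolding Y_def I_def by auto
    ultimately show "w \<in> Y -` E \<inter> space Pr" using w acc_iff[OF M0 K(2)] IJ
      unfolding E_def accepted_def emp_cdf_def by (auto simp: Y_def)
  next
    fix w assume w: "w \<in> Y -` E \<inter> space Pr"
    have "{i\<in>I. r (Y w i) \<le> r (Y w 0)} = {i. i < M \<and> r (X i w) \<le> r (X 0 w)}"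
      using IJ unfolding Y_def I_def by auto
    then show "w \<in> {w\<in>space Pr. X 0 w \<in> A \<and> accepted M K X r 0 w}" using w acc_iff[OF M0 K(2)] IJ
      unfolding E_def accepted_def emp_cdf_def by (auto simp: Y_def)
  qed
  have "emeasure Pr {w\<in>space Pr. X 0 w \<in> A \<and> accepted M K X r 0 w} = emeasure Q E"
  proof -
    have "distr Pr Q Y = Q" using dQ unfolding YX' .
    then show ?thesis unfolding ev using emeasure_distr[OF Ym Es] by simp
  qed
  also have "\<dots> = (\<integral>\<^sup>+x. indicator A x * ennreal (\<Sum>k<K. real ((M-1) choose k) * reward_cdf N r (r x) ^ (M-k-1)
          * (1 - reward_cdf N r (r x)) ^ k) \<partial>N)"
  proof -
    interpret QJ: prob_space QJ unfolding QJ_def by (intro prob_space_PiM) (rule N)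
    define T :: "'a \<times> (nat \<Rightarrow> 'a) \<Rightarrow> (nat \<Rightarrow> 'a)" where "T = (\<lambda>p. (snd p)(0 := fst p))"
    have Tm: "T \<in> measurable (N \<Otimes>\<^sub>M QJ) Q"
      unfolding T_def Q_def QJ_def split_beta'
      by (rule measurable_fun_upd[where J=J]) (use IJ in auto)
    have dT: "distr (N \<Otimes>\<^sub>M QJ) Q T = Q"
      unfolding T_def Q_def QJ_def IJ(1) using distr_pair_PiM_eq_PiM[of J "\<lambda>_. N" 0] N by (simp add: split_beta')
    define P' where "P' = T -` E \<inter> space (N \<Otimes>\<^sub>M QJ)"
    have P's: "P' \<in> sets (N \<Otimes>\<^sub>M QJ)" unfolding P'_def using Tm Es by (rule measurable_sets)
    have "emeasure Q E = emeasure (N \<Otimes>\<^sub>M QJ) P'"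
      unfolding P'_def using emeasure_distr[OF Tm Es] dT by simp
    also have "\<dots> = (\<integral>\<^sup>+x. emeasure QJ (Pair x -` P') \<partial>N)"
      using P's by (rule QJ.emeasure_pair_measure_alt)
    also have "\<dots> = (\<integral>\<^sup>+x. indicator A x * ennreal (\<Sum>k<K. real ((M-1) choose k) * reward_cdf N r (r x) ^ (M-k-1)
          * (1 - reward_cdf N r (r x)) ^ k) \<partial>N)"
    proof (intro nn_integral_cong)
      fix x assume x: "x \<in> space N"
      define B where "B = {y\<in>space N. r y \<le> r x}"
      have Bs: "B \<in> sets N" unfolding B_def by measurable
      have mB: "measure N B = reward_cdf N r (r x)" unfolding B_def reward_cdf_def ..
      define C where "C = {\<omega>\<in>space QJ. M - K \<le> card {i\<in>J. \<omega> i \<in> B}}"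
      have slice: "Pair x -` P' = (if x \<in> A then C else {})"
      proof (intro equalityI subsetI)
        fix w assume ww: "w \<in> Pair x -` P'"
        then have w1: "w \<in> space QJ" "w(0 := x) \<in> E" unfolding P'_def T_def using x by (auto simp: space_pair_measure)
        have sub: "{i\<in>I. r ((w(0 := x)) i) \<le> r ((w(0 := x)) 0)} = insert 0 {i\<in>J. w i \<in> B}"
          using IJ w1(1) unfolding B_def QJ_def by (auto simp: space_PiM PiE_iff)
        have "card (insert 0 {i\<in>J. w i \<in> B}) = Suc (card {i\<in>J. w i \<in> B})"
          using IJ by (intro card_insert_disjoint) auto
        then show "w \<in> (if x \<in> A then C else {})" using w1 sub unfolding E_def C_def by auto
      next
        fix w assume ww: "w \<in> (if x \<in> A then C else {})"
        then have w1: "x \<in> A" "w \<in> space QJ" "M - K \<le> card {i\<in>J. w i \<in> B}"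
          unfolding C_def by (auto split: if_splits)
        have sub: "{i\<in>I. r ((w(0 := x)) i) \<le> r ((w(0 := x)) 0)} = insert 0 {i\<in>J. w i \<in> B}"
          using IJ w1(2) unfolding B_def QJ_def by (auto simp: space_PiM PiE_iff)
        have "card (insert 0 {i\<in>J. w i \<in> B}) = Suc (card {i\<in>J. w i \<in> B})"
          using IJ by (intro card_insert_disjoint) auto
        moreover have "w(0 := x) \<in> space Q"
          using w1(2) x IJ unfolding Q_def QJ_def by (auto simp: space_PiM PiE_iff extensional_def)
        ultimately have "w(0 := x) \<in> E" using w1 sub unfolding E_def by auto
        then show "w \<in> Pair x -` P'" using w1 x unfolding P'_def T_def by (auto simp: space_pair_measure)
      qed
      have "emeasure QJ C = ennreal (\<Sum>j\<in>{M-K..card J}. real (card J choose j) * measure N B ^ j * (1 - measure N B) ^ (card J - j))"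
        unfolding C_def QJ_def using box_count[OF N IJ(3) Bs] by simp
      also have "\<dots> = ennreal (\<Sum>k<K. real ((M-1) choose k) * reward_cdf N r (r x) ^ (M-k-1)
          * (1 - reward_cdf N r (r x)) ^ k)"
        unfolding mB IJ(4) using binom_reindex[OF K] by simp
      finally show "emeasure QJ (Pair x -` P') = indicator A x * ennreal (\<Sum>k<K. real ((M-1) choose k) * reward_cdf N r (r x) ^ (M-k-1)
          * (1 - reward_cdf N r (r x)) ^ k)"
        unfolding slice by (simp add: indicator_def)
    qed
    finally show ?thesis .
  qed
  finally show ?thesis .
qed



definition GG :: "nat \<Rightarrow> nat \<Rightarrow> real \<Rightarrow> real" where
  "GG M K p = (\<Sum>k<K. real ((M - 1) choose k) * p ^ (M - k - 1) * (1 - p) ^ k)"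

lemma GG_props:
  assumes p: "0 \<le> p" "p \<le> 1" and K: "1 \<le> K" "K \<le> M"
  shows "0 \<le> GG M K p" "GG M K p \<le> 1" "p ^ (M - 1) \<le> GG M K p" "K = M \<Longrightarrow> GG M K p = 1"
proof -
  define t where "t k = real ((M - 1) choose k) * p ^ (M - k - 1) * (1 - p) ^ k" for k
  have t0: "0 \<le> t k" for k unfolding t_def using p by simp
  have full: "(\<Sum>k\<le>M-1. t k) = 1"
  proof -
    have "((1 - p) + p) ^ (M - 1) = (\<Sum>k\<le>M-1. real ((M-1) choose k) * (1 - p) ^ k * p ^ (M - 1 - k))"
      by (rule binomial_ring)
    also have "\<dots> = (\<Sum>k\<le>M-1. t k)" unfolding t_def by (intro sum.cong refl) (simp add: mult_ac)
    finally show ?thesis by simp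
  qed
  have sub: "{..<K} \<subseteq> {..M-1}" using K by auto
  show "0 \<le> GG M K p" unfolding GG_def t_def[symmetric] using t0 by (simp add: sum_nonneg)
  show "GG M K p \<le> 1" unfolding GG_def t_def[symmetric] using full sum_mono2[OF _ sub, of t] t0 by auto
  have "t 0 \<le> (\<Sum>k<K. t k)" using K t0 by (intro member_le_sum) auto
  then show "p ^ (M - 1) \<le> GG M K p" unfolding GG_def t_def[symmetric] by (simp add: t_def)
  assume "K = M"
  then have "{..<K} = {..M-1}" using K by auto
  then show "GG M K p = 1" unfolding GG_def t_def[symmetric] using full by simp
qed

lemma AE_ge:
  fixes N :: "'a measure" and r :: "'a \<Rightarrow> real"
  assumes N: "prob_space N" and r[measurable]: "r \<in> borel_measurable N"
    and z: "\<And>t. t < s \<Longrightarrow> measure N {x\<in>space N. r x \<le> t} = 0"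
  shows "AE x in N. s \<le> r x"
proof -
  interpret N: prob_space N by fact
  have "AE x in N. s - 1 / Suc n < r x" for n :: nat
  proof (subst AE_iff_measurable[OF _ refl])
    show "{x \<in> space N. \<not> s - 1 / real (Suc n) < r x} \<in> sets N" by measurable
    have "measure N {x \<in> space N. \<not> s - 1 / real (Suc n) < r x} = 0"
      using z[of "s - 1 / Suc n"] by (simp add: not_less)
    then show "emeasure N {x \<in> space N. \<not> s - 1 / real (Suc n) < r x} = 0"
      by (simp add: N.emeasure_eq_measure)
  qed
  then have "AE x in N. \<forall>n::nat. s - 1 / Suc n < r x" by (simp add: AE_all_countable)
  then show ?thesis
  proof (rule AE_mp, intro AE_I2 impI)
    fix x assume h: "\<forall>n::nat. s - 1 / Suc n < r x"
    show "s \<le> r x"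
    proof (rule ccontr)
      assume "\<not> s \<le> r x"
      then obtain n where "inverse (real (Suc n)) < s - r x" using reals_Archimedean[of "s - r x"] by auto
      then show False using h[rule_format, of n] by (simp add: field_simps)
    qed
  qed
qed

lemma AE_F_pos:
  fixes N :: "'a measure" and r :: "'a \<Rightarrow> real"
  assumes N: "prob_space N" and r[measurable]: "r \<in> borel_measurable N"
    and cont: "\<forall>t. measure N {x \<in> space N. r x = t} = 0"
  shows "AE x in N. 0 < reward_cdf N r (r x)"
proof -
  interpret N: prob_space N by fact
  let ?F = "reward_cdf N r"
  have Fmono: "?F s \<le> ?F t" if "s \<le> t" for s t
    unfolding reward_cdf_def using that by (intro N.finite_measure_mono) auto
  have F0: "0 \<le> ?F t" for t unfolding reward_cdf_def by simp
  define Z where "Z = {t. ?F t = 0}"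
  show ?thesis
  proof (cases "Z = {}")
    case True
    then show ?thesis using F0 unfolding Z_def by (intro AE_I2) (auto simp: order_le_less)
  next
    case ne: False
    show ?thesis
    proof (cases "bdd_above Z")
      case False
      have "AE x in N. real n \<le> r x" for n :: nat
      proof (rule AE_ge[OF N r])
        fix t assume "t < real n"
        obtain z where "z \<in> Z" "real n < z" using False unfolding bdd_above_def by (meson not_le)
        then have "?F t = 0" using Fmono[of t z] F0[of t] \<open>t < real n\<close> unfolding Z_def by auto
        then show "measure N {x\<in>space N. r x \<le> t} = 0" unfolding reward_cdf_def .
      qed
      then have "AE x in N. \<forall>n::nat. real n \<le> r x" by (simp add: AE_all_countable)
      then have "AE x in N. False"
        by (rule AE_mp) (auto intro!: AE_I2 simp: not_le reals_Archimedean2)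
      then show ?thesis by (rule AE_mp) auto
    next
      case True
      define s where "s = Sup Z"
      have "AE x in N. s \<le> r x"
      proof (rule AE_ge[OF N r])
        fix t assume "t < s"
        then obtain z where "z \<in> Z" "t < z" using less_cSup_iff[OF ne True] unfolding s_def by auto
        then have "?F t = 0" using Fmono[of t z] F0[of t] unfolding Z_def by auto
        then show "measure N {x\<in>space N. r x \<le> t} = 0" unfolding reward_cdf_def .
      qed
      moreover have "AE x in N. r x \<noteq> s"
      proof (subst AE_iff_measurable[OF _ refl])
        show "{x \<in> space N. \<not> r x \<noteq> s} \<in> sets N" by measurable
        show "emeasure N {x \<in> space N. \<not> r x \<noteq> s} = 0"
          using cont by (simp add: N.emeasure_eq_measure)
      qed
      ultimately show ?thesis
      proof (eventually_elim)
        fix x assume "s \<le> r x" "r x \<noteq> s"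
        then have "s < r x" by auto
        then have "r x \<notin> Z" using cSup_upper[OF _ True] unfolding s_def by force
        then show "0 < ?F (r x)" using F0[of "r x"] unfolding Z_def by auto
      qed
    qed
  qed
qed



theorem mainTheorem2:
  fixes Pr :: "'w measure" and pbar :: "'a measure"
    and X :: "nat \<Rightarrow> 'w \<Rightarrow> 'a" and r :: "'a \<Rightarrow> real"
    and \<alpha> :: real and M K :: nat
  assumes "prob_space Pr" and "prob_space pbar"
    and "r \<in> borel_measurable pbar"
    and "\<alpha> > 0" and "1 \<le> K" and "K \<le> M"
    and "\<forall>i<M. X i \<in> measurable Pr pbar"
    and "\<forall>i<M. distr Pr pbar (X i) = pbar"
    and "prob_space.indep_vars Pr (\<lambda>_. pbar) X {..<M}"
    and "\<forall>t. measure pbar {x \<in> space pbar. r x = t} = 0"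
  shows "measure Pr {w \<in> space Pr. accepted M K X r 0 w} > 0
    \<and> integrable pbar (\<lambda>x. exp (rhat \<alpha> M K (reward_cdf pbar r) r x / \<alpha>))
    \<and> (\<integral>x. exp (rhat \<alpha> M K (reward_cdf pbar r) r x / \<alpha>) \<partial>pbar) > 0
    \<and> (\<forall>A \<in> sets pbar.
         measure Pr {w \<in> space Pr. X 0 w \<in> A \<and> accepted M K X r 0 w}
           / measure Pr {w \<in> space Pr. accepted M K X r 0 w}
         = (\<integral>x\<in>A. exp (rhat \<alpha> M K (reward_cdf pbar r) r x / \<alpha>) \<partial>pbar)
           / (\<integral>x. exp (rhat \<alpha> M K (reward_cdf pbar r) r x / \<alpha>) \<partial>pbar))
    \<and> (M = 2 \<and> K = 1 \<longrightarrow>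
         (\<forall>x. rhat \<alpha> M K (reward_cdf pbar r) r x / \<alpha> = ln (reward_cdf pbar r (r x))))
    \<and> (K = M \<longrightarrow> (\<forall>x. rhat \<alpha> M K (reward_cdf pbar r) r x = 0))"
proof -
  note Pr = assms(1) and N = assms(2) and rm[measurable] = assms(3) and alpha = assms(4)
    and K = assms(5,6) and Xm = assms(7) and Xd = assms(8) and ind = assms(9) and cont = assms(10)
  interpret Pr: prob_space Pr by fact
  interpret N: prob_space pbar by fact
  define F where "F = reward_cdf pbar r"
  define g where "g x = GG M K (F (r x))" for x
  define e where "e x = exp (rhat \<alpha> M K F r x / \<alpha>)" for x
  have F01: "0 \<le> F t" "F t \<le> 1" for t unfolding F_def reward_cdf_def by auto
  have Fmono: "mono F"
    unfolding mono_def F_def reward_cdf_def by (intro allI impI N.finite_measure_mono) auto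
  have Fb: "F \<in> borel_measurable borel" using Fmono by (rule borel_measurable_mono)
  have Fr[measurable]: "(\<lambda>x. F (r x)) \<in> borel_measurable pbar"
    using measurable_compose[OF rm Fb] by (simp add: comp_def)
  have gm[measurable]: "g \<in> borel_measurable pbar" unfolding g_def GG_def by measurable
  have rh: "rhat \<alpha> M K F r x = \<alpha> * ln (g x)" for x unfolding rhat_def g_def GG_def ..
  have em[measurable]: "e \<in> borel_measurable pbar" unfolding e_def rh by measurable
  have g01: "0 \<le> g x" "g x \<le> 1" for x unfolding g_def using GG_props[OF F01 K] by auto
  have AEg: "AE x in pbar. 0 < g x"
    using AE_F_pos[OF N rm cont] unfolding F_def[symmetric]
  proof (rule AE_mp, intro AE_I2 impI)
    fix x assume "0 < F (r x)"
    then have "0 < F (r x) ^ (M - 1)" by simp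
    then show "0 < g x" unfolding g_def using GG_props(3)[OF F01 K] by (meson less_le_trans)
  qed
  have AEe: "AE x in pbar. e x = g x"
    using AEg by (rule AE_mp) (auto intro!: AE_I2 simp: e_def rh less_imp_neq[OF alpha, symmetric])
  have gint: "integrable pbar g"
    by (rule N.integrable_const_bound[where B=1]) (use g01 in auto)
  have eint: "integrable pbar e"
    using integrable_cong_AE[OF em gm AEe] gint by simp
  have eg: "(\<integral>x. e x \<partial>pbar) = (\<integral>x. g x \<partial>pbar)" by (rule integral_cong_AE[OF em gm AEe])
  have egA: "(\<integral>x\<in>A. e x \<partial>pbar) = (\<integral>x. indicator A x * g x \<partial>pbar)" if "A \<in> sets pbar" for A
  proof -
    have "AE x in pbar. indicator A x *\<^sub>R e x = indicator A x * g x" using AEe by eventually_elim simp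
    then show ?thesis unfolding set_lebesgue_integral_def using that by (intro integral_cong_AE) auto
  qed
  have gpos: "(\<integral>x. g x \<partial>pbar) > 0"
  proof -
    have "0 \<le> (\<integral>x. g x \<partial>pbar)" using g01 by simp
    moreover have "(\<integral>x. g x \<partial>pbar) \<noteq> 0"
    proof
      assume "(\<integral>x. g x \<partial>pbar) = 0"
      then have "AE x in pbar. g x = 0" using integral_nonneg_eq_0_iff_AE[OF gint] g01 by auto
      with AEg have "AE x in pbar. False" by eventually_elim auto
      then show False by simp
    qed
    ultimately show ?thesis by simp
  qed
  have mev: "measure Pr {w \<in> space Pr. X 0 w \<in> A \<and> accepted M K X r 0 w} = (\<integral>x. indicator A x * g x \<partial>pbar)"
    if A: "A \<in> sets pbar" for A
  proof -
    have "measure Pr {w \<in> space Pr. X 0 w \<in> A \<and> accepted M K X r 0 w}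
       = enn2real (\<integral>\<^sup>+x. indicator A x * ennreal (g x) \<partial>pbar)"
      unfolding measure_def key[OF Pr N rm K Xm Xd ind A] g_def GG_def F_def ..
    also have "\<dots> = (\<integral>x. indicator A x * g x \<partial>pbar)"
      using A g01 by (intro enn2real_nn_integral_eq_integral) (auto simp: indicator_def)
    finally show ?thesis .
  qed
  have accsp: "{w \<in> space Pr. accepted M K X r 0 w} = {w \<in> space Pr. X 0 w \<in> space pbar \<and> accepted M K X r 0 w}"
    using Xm K measurable_space[of "X 0" Pr pbar] by auto
  have macc: "measure Pr {w \<in> space Pr. accepted M K X r 0 w} = (\<integral>x. g x \<partial>pbar)"
    unfolding accsp mev[OF sets.top] by (intro Bochner_Integration.integral_cong) auto
  show ?thesis
  proof (intro conjI ballI impI allI)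
    show "measure Pr {w \<in> space Pr. accepted M K X r 0 w} > 0" using macc gpos by simp
    show "integrable pbar (\<lambda>x. exp (rhat \<alpha> M K (reward_cdf pbar r) r x / \<alpha>))"
      using eint unfolding e_def F_def .
    show "(\<integral>x. exp (rhat \<alpha> M K (reward_cdf pbar r) r x / \<alpha>) \<partial>pbar) > 0"
      using eg gpos unfolding e_def F_def by simp
  next
    fix A assume A: "A \<in> sets pbar"
    show "measure Pr {w \<in> space Pr. X 0 w \<in> A \<and> accepted M K X r 0 w}
           / measure Pr {w \<in> space Pr. accepted M K X r 0 w}
         = (\<integral>x\<in>A. exp (rhat \<alpha> M K (reward_cdf pbar r) r x / \<alpha>) \<partial>pbar)
           / (\<integral>x. exp (rhat \<alpha> M K (reward_cdf pbar r) r x / \<alpha>) \<partial>pbar)"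
      using mev[OF A] macc egA[OF A] eg unfolding e_def F_def by simp
  next
    fix x assume "M = 2 \<and> K = 1"
    then show "rhat \<alpha> M K (reward_cdf pbar r) r x / \<alpha> = ln (reward_cdf pbar r (r x))"
      using alpha by (simp add: rhat_def)
  next
    fix x assume KM: "K = M"
    show "rhat \<alpha> M K (reward_cdf pbar r) r x = 0"
      using GG_props(4)[OF F01 K KM, of "r x"] unfolding rhat_def GG_def F_def by simp
  qed
qed

end
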